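(* Let $\lambda\in\mathfrak{h}^*$ be integral with $\lambda+\rho$ dominant, and suppose $\Sigma=\{\alpha_{i_1},\dots,\alpha_{i_s}\}$ ($i_1<\dots<i_s$) contains no two adjacent simple roots. Identify $W^{\mathfrak{p}}$ with $\{0,1\}^n$ via LS words. (1) If $\alpha_n\notin\Sigma$, then $W^{\mathfrak{p},\Sigma}=\{d_1\dots d_n: d_{i_k}d_{i_k+1}=01 \text{ for } k=1,\dots,s\}$. (2) If $\alpha_n\in\Sigma$ (so $i_s=n$), then $W^{\mathfrak{p},\Sigma}=\{d_1\dots d_{n-1}0: d_{i_k}d_{i_k+1}=01\text{ for }k=1,\dots,s-1\}$.
   Context: Setup: $\mathfrak{g}=\mathfrak{sp}(2n,\mathbb{C})$, weights $[\lambda_1,\dots,\lambda_n]$; integral means all $\lambda_i\in\mathbb{Z}$, dominant means $\lambda_1\ge\dots\ge\lambda_n\ge 0$. Positive roots $a_{ij}=\epsilon_i-\epsilon_j$, $b_i=2\epsilon_i$, $c_{ij}=\epsilon_i+\epsilon_j$, $c_{ii}:=b_i$; simple roots $\alpha_i=\epsilon_i-\epsilon_{i+1}$ ($i<n$), $\alpha_n=2\epsilon_n$; $\rho=[n,\dots,1]$. $\mathfrak{p}$ is the parabolic with Levi containing $\alpha_1,\dots,\alpha_{n-1}$, $\Delta(\mathfrak{u})=\{c_{ij}:i\le j\}$; $\Phi_w=\{\alpha>0:w^{-1}\alpha<0\}$; $W^{\mathfrak{p}}=\{w\in W:\Phi_w\subseteq\Delta(\mathfrak{u})\}$. Simple singular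 roots: $\Sigma=\{\alpha\text{ simple}:\langle\lambda+\rho,\alpha^\vee\rangle=0\}$. Singular Hasse diagram: $W^{\mathfrak{p},\Sigma}=\{w\in W^{\mathfrak{p}}: w\sigma_\alpha\in W^{\mathfrak{p}}\text{ and } l(w\sigma_\alpha)>l(w)\text{ for all }\alpha\in\Sigma\}$. LS word of $w\in W^{\mathfrak{p}}$: the unique $d\in\{0,1\}^n$ with $\Phi_w=S(d)$, where for $d$ with ones exactly at positions $j_1<\dots<j_k$, $S(d)=\{c_{r,\,n+1-m}:1\le m\le k,\ j_m-m+1\le r\le n+1-m\}$. *)

theory Defs
  imports Main
begin

text \<open>Type C_n, g = sp(2n,C). Coordinates are indexed 1..n.
 Weights/roots are functions nat => int (only coordinates 1..n matter).
 Weyl group elements are signed permutations, represented as maps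
 w :: int => int on the index set {-n..-1,1..n} with w(-x) = -w x,
 meaning w(eps_j) = eps_{w j} where eps_{-k} = -eps_k.\<close>

definition simple_refl :: "nat \<Rightarrow> nat \<Rightarrow> int \<Rightarrow> int" where
  "simple_refl n i = (if i < n then
      (\<lambda>x. if x = int i then int i + 1 else if x = int i + 1 then int i
           else if x = - int i then - (int i + 1) else if x = - (int i + 1) then - int i else x)
    else (\<lambda>x. if x = int n then - int n else if x = - int n then int n else x))"

definition word_elem :: "nat \<Rightarrow> nat list \<Rightarrow> int \<Rightarrow> int" where
  "word_elem n is = foldr (\<lambda>i acc. simple_refl n i \<circ> acc) is id"

definition weyl :: "nat \<Rightarrow> (int \<Rightarrow> int) set" where
  "weyl n = {word_elem n is | is. set is \<subseteq> {1..n}}"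

definition len :: "nat \<Rightarrow> (int \<Rightarrow> int) \<Rightarrow> nat" where
  "len n w = (LEAST k. \<exists>is. set is \<subseteq> {1..n} \<and> length is = k \<and> word_elem n is = w)"

text \<open>Action of w^{-1} on a vector v: w^{-1} eps_k = sgn(w j) eps_j where |w j| = k.\<close>
definition inv_act :: "nat \<Rightarrow> (int \<Rightarrow> int) \<Rightarrow> (nat \<Rightarrow> int) \<Rightarrow> nat \<Rightarrow> int" where
  "inv_act n w v = (\<lambda>i. if 1 \<le> i \<and> i \<le> n then sgn (w (int i)) * v (nat \<bar>w (int i)\<bar>) else 0)"

definition root_a :: "nat \<Rightarrow> nat \<Rightarrow> nat \<Rightarrow> int" where
  "root_a i j = (\<lambda>k. (if k = i then 1 else 0) - (if k = j then 1 else 0))"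

text \<open>root_c i j = eps_i + eps_j; root_c i i = 2 eps_i = b_i.\<close>
definition root_c :: "nat \<Rightarrow> nat \<Rightarrow> nat \<Rightarrow> int" where
  "root_c i j = (\<lambda>k. (if k = i then 1 else 0) + (if k = j then 1 else 0))"

definition pos_roots :: "nat \<Rightarrow> (nat \<Rightarrow> int) set" where
  "pos_roots n = {root_a i j | i j. 1 \<le> i \<and> i < j \<and> j \<le> n}
               \<union> {root_c i j | i j. 1 \<le> i \<and> i \<le> j \<and> j \<le> n}"

definition neg_roots :: "nat \<Rightarrow> (nat \<Rightarrow> int) set" where
  "neg_roots n = (\<lambda>v. (\<lambda>k. - v k)) ` pos_roots n"

definition Phi :: "nat \<Rightarrow> (int \<Rightarrow> int) \<Rightarrow> (nat \<Rightarrow> int) set" where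
  "Phi n w = {\<alpha> \<in> pos_roots n. inv_act n w \<alpha> \<in> neg_roots n}"

definition Delta_u :: "nat \<Rightarrow> (nat \<Rightarrow> int) set" where
  "Delta_u n = {root_c i j | i j. 1 \<le> i \<and> i \<le> j \<and> j \<le> n}"

definition Wp :: "nat \<Rightarrow> (int \<Rightarrow> int) set" where
  "Wp n = {w \<in> weyl n. Phi n w \<subseteq> Delta_u n}"

text \<open>lambda + rho, with rho = [n, ..., 1].\<close>
definition lam_rho :: "nat \<Rightarrow> (nat \<Rightarrow> int) \<Rightarrow> nat \<Rightarrow> int" where
  "lam_rho n lam i = lam i + int (n + 1 - i)"

text \<open>Simple singular roots, as the set of indices i with alpha_i singular.
 Coroots: alpha_i^vee = eps_i - eps_{i+1} (i<n), alpha_n^vee = eps_n.\<close>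
definition Sigma :: "nat \<Rightarrow> (nat \<Rightarrow> int) \<Rightarrow> nat set" where
  "Sigma n lam = {i \<in> {1..n}.
     (if i < n then lam_rho n lam i - lam_rho n lam (i + 1) else lam_rho n lam n) = 0}"

definition WpSigma :: "nat \<Rightarrow> (nat \<Rightarrow> int) \<Rightarrow> (int \<Rightarrow> int) set" where
  "WpSigma n lam = {w \<in> Wp n. \<forall>i \<in> Sigma n lam.
      w \<circ> simple_refl n i \<in> Wp n \<and> len n (w \<circ> simple_refl n i) > len n w}"

text \<open>Words d in {0,1}^n as bool lists of length n; d_j = d ! (j-1).
 ones n d = [j_1, ..., j_k], the positions of the ones in increasing order.\<close>
definition ones :: "nat \<Rightarrow> bool list \<Rightarrow> nat list" where
  "ones n d = filter (\<lambda>j. d ! (j - 1)) [1..<n+1]"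

definition S_set :: "nat \<Rightarrow> bool list \<Rightarrow> (nat \<Rightarrow> int) set" where
  "S_set n d = {root_c r (n + 1 - m) | m r. 1 \<le> m \<and> m \<le> length (ones n d)
      \<and> ones n d ! (m - 1) + 1 - m \<le> r \<and> r \<le> n + 1 - m}"

definition LS :: "nat \<Rightarrow> (int \<Rightarrow> int) \<Rightarrow> bool list" where
  "LS n w = (THE d. length d = n \<and> Phi n w = S_set n d)"

end

theory Submission
  imports Defs
begin


definition II :: "nat \<Rightarrow> int set" where "II n = {x. 1 \<le> \<bar>x\<bar> \<and> \<bar>x\<bar> \<le> int n}"

definition sp :: "nat \<Rightarrow> (int \<Rightarrow> int) \<Rightarrow> bool" where
  "sp n w \<longleftrightarrow> (\<forall>x. w (-x) = - w x) \<and> (\<forall>x. x \<notin> II n \<longrightarrow> w x = x)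
     \<and> (\<forall>x\<in>II n. w x \<in> II n) \<and> inj_on w (II n)"

lemma II_finite: "finite (II n)"
  by (rule finite_subset[of _ "{-int n..int n}"]) (auto simp: II_def)

lemma II_neg[simp]: "(-x \<in> II n) = (x \<in> II n)" by (auto simp: II_def)

lemma sp_surj: "sp n w \<Longrightarrow> w ` II n = II n"
  using endo_inj_surj[OF II_finite, of w n] unfolding sp_def by blast

lemma sp_ex: assumes "sp n w" "a \<in> II n" obtains x where "x \<in> II n" "w x = a"
  using sp_surj[OF assms(1)] assms(2) by (metis imageE)

lemma sp_in: "sp n w \<Longrightarrow> x \<in> II n \<Longrightarrow> w x \<in> II n" unfolding sp_def by blast
lemma sp_odd: "sp n w \<Longrightarrow> w (-x) = - w x" unfolding sp_def by blast
lemma sp_out: "sp n w \<Longrightarrow> x \<notin> II n \<Longrightarrow> w x = x" unfolding sp_def by blast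
lemma sp_inj: "sp n w \<Longrightarrow> x \<in> II n \<Longrightarrow> y \<in> II n \<Longrightarrow> w x = w y \<longleftrightarrow> x = y"
  unfolding sp_def inj_on_def by blast
lemma sp_nz: "sp n w \<Longrightarrow> x \<in> II n \<Longrightarrow> w x \<noteq> 0"
  using sp_in[of n w x] by (auto simp: II_def)

lemma sp_id: "sp n id" unfolding sp_def by simp

lemma sp_comp: "sp n w \<Longrightarrow> sp n v \<Longrightarrow> sp n (w \<circ> v)"
  unfolding sp_def inj_on_def o_def by metis

lemma sr_invol: assumes "1 \<le> i" "i \<le> n" shows "simple_refl n i (simple_refl n i x) = x"
  using assms unfolding simple_refl_def by (auto split: if_splits)

lemma sr_sp: assumes "1 \<le> i" "i \<le> n" shows "sp n (simple_refl n i)"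
proof -
  have inj: "inj_on (simple_refl n i) (II n)"
    by (rule inj_on_inverseI[where g="simple_refl n i"]) (rule sr_invol[OF assms])
  have odd: "\<forall>x. simple_refl n i (-x) = - simple_refl n i x"
    using assms unfolding simple_refl_def by auto
  have out: "\<forall>x. x \<notin> II n \<longrightarrow> simple_refl n i x = x"
    using assms unfolding simple_refl_def II_def by auto
  have inn: "\<forall>x\<in>II n. simple_refl n i x \<in> II n"
    using assms unfolding simple_refl_def II_def by auto
  show ?thesis using inj odd out inn unfolding sp_def by blast
qed

lemma sr_invol': assumes "1 \<le> i" "i \<le> n" shows "w \<circ> simple_refl n i \<circ> simple_refl n i = w"
  using sr_invol[OF assms] by (simp add: fun_eq_iff)

definition Pp :: "int \<Rightarrow> int \<Rightarrow> bool" where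
  "Pp a b = (if \<bar>a\<bar> \<le> \<bar>b\<bar> then 0 < a else 0 < b)"

definition x0 :: "nat \<Rightarrow> int" where "x0 i = int i"
definition y0 :: "nat \<Rightarrow> nat \<Rightarrow> int" where "y0 n i = (if i < n then - (int i + 1) else int n)"

lemma sP: assumes "1 \<le> i" "i \<le> n" "x \<in> II n" "y \<in> II n" "x \<noteq> -y"
  shows "Pp (simple_refl n i x) (simple_refl n i y) =
    (if (x = x0 i \<and> y = y0 n i) \<or> (x = y0 n i \<and> y = x0 i) then False
     else if (x = - x0 i \<and> y = - y0 n i) \<or> (x = - y0 n i \<and> y = - x0 i) then True
     else Pp x y)"
proof (cases "i < n")
  case True
  let ?s = "simple_refl n i"
  have s: "?s z = (if z = int i then int i + 1 else if z = int i + 1 then int i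
           else if z = - int i then - (int i + 1) else if z = - (int i + 1) then - int i else z)" for z
    using True unfolding simple_refl_def by simp
  show ?thesis using True assms unfolding s Pp_def x0_def y0_def II_def
    by (simp split: if_split_asm) (smt (verit))
next
  case False
  hence i: "i = n" using assms by simp
  have s: "simple_refl n i z = (if z = int n then - int n else if z = - int n then int n else z)" for z
    using i unfolding simple_refl_def by simp
  show ?thesis using i assms unfolding s Pp_def x0_def y0_def II_def
    by (simp split: if_split_asm) (smt (verit))
qed

definition ev :: "int \<Rightarrow> nat \<Rightarrow> int" where
  "ev x = (\<lambda>k. if int k = \<bar>x\<bar> then sgn x else 0)"
definition EE :: "int \<Rightarrow> int \<Rightarrow> nat \<Rightarrow> int" where
  "EE a b = (\<lambda>k. ev a k + ev b k)"

lemma EE_sym: "EE a b = EE b a" by (auto simp: EE_def)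

lemma root_c_EE: "1 \<le> i \<Longrightarrow> 1 \<le> j \<Longrightarrow> root_c i j = EE (int i) (int j)"
  unfolding root_c_def EE_def ev_def by (auto simp: fun_eq_iff)

lemma root_a_EE: "1 \<le> i \<Longrightarrow> 1 \<le> j \<Longrightarrow> root_a i j = EE (int i) (- int j)"
  unfolding root_a_def EE_def ev_def by (auto simp: fun_eq_iff)

lemma EE_neg: "(\<lambda>k. - EE a b k) = EE (-a) (-b)"
  unfolding EE_def ev_def by (auto simp: fun_eq_iff)

lemma EE_inj: assumes "a \<in> II n" "b \<in> II n" "c \<in> II n" "d \<in> II n" "a \<noteq> -b" "c \<noteq> -d"
  and eq: "EE a b = EE c d"
  shows "(a = c \<and> b = d) \<or> (a = d \<and> b = c)"
proof -
  have h: "ev a k + ev b k = ev c k + ev d k" for k using eq unfolding EE_def by metis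
  note h1 = h[of "nat \<bar>a\<bar>"] and h2 = h[of "nat \<bar>b\<bar>"] and h3 = h[of "nat \<bar>c\<bar>"] and h4 = h[of "nat \<bar>d\<bar>"]
  show ?thesis using h1 h2 h3 h4 assms(1-6) unfolding ev_def II_def
    by (auto simp: sgn_if abs_if split: if_split_asm)
qed

lemma Pp_sym: "a \<noteq> -b \<Longrightarrow> Pp a b = Pp b a" unfolding Pp_def by auto

lemma Pp_neg: "a \<noteq> -b \<Longrightarrow> a \<noteq> 0 \<Longrightarrow> b \<noteq> 0 \<Longrightarrow> Pp (-a) (-b) = (\<not> Pp a b)"
  unfolding Pp_def by auto

lemma II_nz: "x \<in> II n \<Longrightarrow> x \<noteq> 0" by (auto simp: II_def)

lemma pos_char: "pos_roots n = {EE a b | a b. a \<in> II n \<and> b \<in> II n \<and> a \<noteq> -b \<and> Pp a b}"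
proof (rule set_eqI, rule iffI)
  fix v assume "v \<in> pos_roots n"
  then consider (a) i j where "1 \<le> i" "i < j" "j \<le> n" "v = root_a i j"
    | (c) i j where "1 \<le> i" "i \<le> j" "j \<le> n" "v = root_c i j"
    unfolding pos_roots_def by blast
  then show "v \<in> {EE a b | a b. a \<in> II n \<and> b \<in> II n \<and> a \<noteq> -b \<and> Pp a b}"
  proof cases
    case a
    then show ?thesis
      by (intro CollectI exI[of _ "int i"] exI[of _ "- int j"]) (auto simp: root_a_EE II_def Pp_def)
  next
    case c
    then show ?thesis
      by (intro CollectI exI[of _ "int i"] exI[of _ "int j"]) (auto simp: root_c_EE II_def Pp_def)
  qed
next
  fix v assume "v \<in> {EE a b | a b. a \<in> II n \<and> b \<in> II n \<and> a \<noteq> -b \<and> Pp a b}"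
  then obtain a b where v: "v = EE a b" and ab: "a \<in> II n" "b \<in> II n" "a \<noteq> -b" "Pp a b" by blast
  have ca: "v = root_c (nat a) (nat b)" if "0 < a" "0 < b" using that v by (simp add: root_c_EE)
  have cb: "v = root_c (nat b) (nat a)" if "0 < a" "0 < b" using that v by (simp add: root_c_EE EE_sym)
  have aa: "v = root_a (nat a) (nat (-b))" if "0 < a" "b < 0" using that v by (simp add: root_a_EE)
  have ab': "v = root_a (nat b) (nat (-a))" if "0 < b" "a < 0" using that v by (simp add: root_a_EE EE_sym)
  show "v \<in> pos_roots n"
  proof (cases "0 < a")
    case pa: True
    show ?thesis
    proof (cases "0 < b")
      case True
      show ?thesis
      proof (cases "a \<le> b")
        case True thus ?thesis using ca[OF pa \<open>0<b\<close>] ab pa \<open>0<b\<close> unfolding pos_roots_def II_def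
          by (intro UnI2 CollectI exI[of _ "nat a"] exI[of _ "nat b"]) auto
      next
        case False thus ?thesis using cb[OF pa \<open>0<b\<close>] ab pa \<open>0<b\<close> unfolding pos_roots_def II_def
          by (intro UnI2 CollectI exI[of _ "nat b"] exI[of _ "nat a"]) auto
      qed
    next
      case False
      hence "b < 0" "\<bar>a\<bar> < \<bar>b\<bar>" using ab pa II_nz[of b n] unfolding Pp_def by (auto split: if_splits)
      thus ?thesis using aa[OF pa \<open>b<0\<close>] ab pa unfolding pos_roots_def II_def
        by (intro UnI1 CollectI exI[of _ "nat a"] exI[of _ "nat (-b)"]) auto
    qed
  next
    case False
    hence na: "a < 0" using II_nz[OF ab(1)] by simp
    hence "0 < b" "\<bar>b\<bar> < \<bar>a\<bar>" using ab unfolding Pp_def by (auto split: if_splits)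
    thus ?thesis using ab'[OF \<open>0<b\<close> na] ab na unfolding pos_roots_def II_def
      by (intro UnI1 CollectI exI[of _ "nat b"] exI[of _ "nat (-a)"]) auto
  qed
qed

lemma neg_char: "neg_roots n = {EE a b | a b. a \<in> II n \<and> b \<in> II n \<and> a \<noteq> -b \<and> \<not> Pp a b}"
proof (rule set_eqI, rule iffI)
  fix v assume "v \<in> neg_roots n"
  then obtain a b where "v = (\<lambda>k. - EE a b k)" "a \<in> II n" "b \<in> II n" "a \<noteq> -b" "Pp a b"
    unfolding neg_roots_def pos_char by blast
  thus "v \<in> {EE a b | a b. a \<in> II n \<and> b \<in> II n \<and> a \<noteq> -b \<and> \<not> Pp a b}"
    using Pp_neg[of a b] II_nz[of a n] II_nz[of b n]
    by (intro CollectI exI[of _ "-a"] exI[of _ "-b"]) (auto simp: EE_neg)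
next
  fix v assume "v \<in> {EE a b | a b. a \<in> II n \<and> b \<in> II n \<and> a \<noteq> -b \<and> \<not> Pp a b}"
  then obtain a b where v: "v = EE a b" "a \<in> II n" "b \<in> II n" "a \<noteq> -b" "\<not> Pp a b" by blast
  have "EE (-a) (-b) \<in> pos_roots n" unfolding pos_char
    using v Pp_neg[of a b] II_nz[of a n] II_nz[of b n]
    by (intro CollectI exI[of _ "-a"] exI[of _ "-b"]) auto
  moreover have "v = (\<lambda>k. - EE (-a) (-b) k)" using v(1) EE_neg[of "-a" "-b"] by simp
  ultimately show "v \<in> neg_roots n" unfolding neg_roots_def
    by (intro image_eqI[of v "\<lambda>v k. - v k" "EE (-a) (-b)"]) simp_all
qed




lemma ev_w: assumes "sp n w" "x \<in> II n" "1 \<le> k" "k \<le> n"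
  shows "sgn (w (int k)) * ev (w x) (nat \<bar>w (int k)\<bar>) = ev x k"
proof -
  have k: "int k \<in> II n" using assms(3,4) by (auto simp: II_def)
  have wx: "w x \<in> II n" "w x \<noteq> 0" using sp_in[OF assms(1,2)] sp_nz[OF assms(1,2)] by auto
  have wk: "w (int k) \<noteq> 0" using sp_nz[OF assms(1) k] .
  have wo: "w (-x) = - w x" using sp_odd[OF assms(1)] .
  show ?thesis
  proof (cases "\<bar>w (int k)\<bar> = \<bar>w x\<bar>")
    case True
    hence "w (int k) = w x \<or> w (int k) = w (-x)" using wo by (auto simp: abs_if split: if_splits)
    hence "int k = x \<or> int k = -x" using sp_inj[OF assms(1) k] assms(2) by auto
    thus ?thesis using True wx wk wo unfolding ev_def
      by (auto simp: sgn_if)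
  next
    case False
    hence "int k \<noteq> x \<and> int k \<noteq> -x" using wo by auto
    hence "int k \<noteq> \<bar>x\<bar>" by (auto simp: abs_if)
    thus ?thesis using False wk unfolding ev_def by simp
  qed
qed

lemma inv_E: assumes "sp n w" "x \<in> II n" "y \<in> II n"
  shows "inv_act n w (EE (w x) (w y)) = EE x y"
proof (rule ext)
  fix k
  show "inv_act n w (EE (w x) (w y)) k = EE x y k"
  proof (cases "1 \<le> k \<and> k \<le> n")
    case True
    have "inv_act n w (EE (w x) (w y)) k = sgn (w (int k)) * ev (w x) (nat \<bar>w (int k)\<bar>) + sgn (w (int k)) * ev (w y) (nat \<bar>w (int k)\<bar>)"
      using True unfolding inv_act_def EE_def by (simp add: algebra_simps)
    also have "\<dots> = EE x y k" using ev_w[OF assms(1,2)] ev_w[OF assms(1,3)] True unfolding EE_def by simp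
    finally show ?thesis .
  next
    case False
    thus ?thesis using assms(2,3) unfolding inv_act_def EE_def ev_def II_def by auto
  qed
qed

lemma sp_negII: "sp n w \<Longrightarrow> x \<in> II n \<Longrightarrow> y \<in> II n \<Longrightarrow> (w x = - w y) = (x = -y)"
  using sp_inj[of n w x "-y"] sp_odd[of n w y] by auto

lemma pos_form: assumes "sp n w" "v \<in> pos_roots n"
  obtains x y where "x \<in> II n" "y \<in> II n" "x \<noteq> -y" "v = EE (w x) (w y)" "Pp (w x) (w y)"
proof -
  obtain a b where ab: "v = EE a b" "a \<in> II n" "b \<in> II n" "a \<noteq> -b" "Pp a b"
    using assms(2) unfolding pos_char by blast
  obtain x where x: "x \<in> II n" "w x = a" using sp_ex[OF assms(1) ab(2)] by blast
  obtain y where y: "y \<in> II n" "w y = b" using sp_ex[OF assms(1) ab(3)] by blast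
  have "x \<noteq> -y" using sp_negII[OF assms(1) x(1) y(1)] x y ab(4) by auto
  thus ?thesis using that x y ab by blast
qed

lemma PhiMem: assumes "sp n w" "x \<in> II n" "y \<in> II n" "x \<noteq> -y"
  shows "EE (w x) (w y) \<in> Phi n w \<longleftrightarrow> Pp (w x) (w y) \<and> \<not> Pp x y"
proof -
  have wx: "w x \<in> II n" "w y \<in> II n" "w x \<noteq> - w y"
    using sp_in[OF assms(1)] assms sp_negII[OF assms(1,2,3)] by auto
  have pos: "EE (w x) (w y) \<in> pos_roots n \<longleftrightarrow> Pp (w x) (w y)"
  proof
    assume "EE (w x) (w y) \<in> pos_roots n"
    then obtain a b where ab: "EE (w x) (w y) = EE a b" "a \<in> II n" "b \<in> II n" "a \<noteq> -b" "Pp a b"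
      unfolding pos_char by blast
    from EE_inj[OF wx(1,2) ab(2,3) wx(3) ab(4) ab(1)] show "Pp (w x) (w y)"
      using ab(5) Pp_sym[of a b] ab(4) by auto
  qed (use wx in \<open>auto simp: pos_char\<close>)
  have neg: "EE x y \<in> neg_roots n \<longleftrightarrow> \<not> Pp x y"
  proof
    assume "EE x y \<in> neg_roots n"
    then obtain a b where ab: "EE x y = EE a b" "a \<in> II n" "b \<in> II n" "a \<noteq> -b" "\<not> Pp a b"
      unfolding neg_char by blast
    from EE_inj[OF assms(2,3) ab(2,3) assms(4) ab(4) ab(1)] show "\<not> Pp x y"
      using ab(5) Pp_sym[of a b] ab(4) by auto
  qed (use assms in \<open>auto simp: neg_char\<close>)
  show ?thesis unfolding Phi_def using pos neg inv_E[OF assms(1,2,3)] by auto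
qed

lemma Phi_pos: "Phi n w \<subseteq> pos_roots n" unfolding Phi_def by auto

lemma pos_finite: "finite (pos_roots n)"
proof -
  have "pos_roots n \<subseteq> (\<lambda>(a,b). EE a b) ` (II n \<times> II n)" unfolding pos_char by auto
  thus ?thesis by (rule finite_subset) (simp add: II_finite)
qed

lemma Phi_finite: "finite (Phi n w)" using finite_subset[OF Phi_pos pos_finite] .

lemma sr_negII: "1 \<le> i \<Longrightarrow> i \<le> n \<Longrightarrow> x \<in> II n \<Longrightarrow> y \<in> II n \<Longrightarrow>
   (simple_refl n i x = - simple_refl n i y) = (x = -y)"
  using sp_negII[OF sr_sp] by blast

lemma PhiMem_s: assumes "sp n w" "1 \<le> i" "i \<le> n" "x \<in> II n" "y \<in> II n" "x \<noteq> -y"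
  shows "EE (w x) (w y) \<in> Phi n (w \<circ> simple_refl n i) \<longleftrightarrow>
     Pp (w x) (w y) \<and> \<not> Pp (simple_refl n i x) (simple_refl n i y)"
proof -
  let ?s = "simple_refl n i"
  have sp2: "sp n (w \<circ> ?s)" using sp_comp[OF assms(1) sr_sp[OF assms(2,3)]] .
  have sx: "?s x \<in> II n" "?s y \<in> II n" "?s x \<noteq> - ?s y"
    using sp_in[OF sr_sp[OF assms(2,3)]] assms(4,5,6) sr_negII[OF assms(2,3,4,5)] by auto
  have "EE (w x) (w y) = EE ((w \<circ> ?s) (?s x)) ((w \<circ> ?s) (?s y))"
    using sr_invol[OF assms(2,3)] by simp
  thus ?thesis using PhiMem[OF sp2 sx] sr_invol[OF assms(2,3)] by simp
qed

lemma x0y0: assumes "1 \<le> i" "i \<le> n" shows "x0 i \<in> II n" "y0 n i \<in> II n" "x0 i \<noteq> - y0 n i"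
  using assms unfolding x0_def y0_def II_def by auto

lemma Pp_x0y0: "1 \<le> i \<Longrightarrow> i \<le> n \<Longrightarrow> Pp (x0 i) (y0 n i)"
  unfolding x0_def y0_def Pp_def by auto

lemma Phi_up: assumes "sp n w" "1 \<le> i" "i \<le> n" "Pp (w (x0 i)) (w (y0 n i))"
  shows "Phi n (w \<circ> simple_refl n i) = insert (EE (w (x0 i)) (w (y0 n i))) (Phi n w)"
    "EE (w (x0 i)) (w (y0 n i)) \<notin> Phi n w"
proof -
  note z = x0y0[OF assms(2,3)]
  show "EE (w (x0 i)) (w (y0 n i)) \<notin> Phi n w"
    using PhiMem[OF assms(1) z] Pp_x0y0[OF assms(2,3)] by simp
  show "Phi n (w \<circ> simple_refl n i) = insert (EE (w (x0 i)) (w (y0 n i))) (Phi n w)"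
  proof (rule set_eqI)
    fix v
    have "v \<in> pos_roots n" if "v \<in> Phi n (w \<circ> simple_refl n i) \<or> v \<in> insert (EE (w (x0 i)) (w (y0 n i))) (Phi n w)"
      using that Phi_pos assms(1,4) z unfolding pos_char
      using sp_in[OF assms(1)] sp_negII[OF assms(1)] by blast
    show "v \<in> Phi n (w \<circ> simple_refl n i) \<longleftrightarrow> v \<in> insert (EE (w (x0 i)) (w (y0 n i))) (Phi n w)"
    proof (cases "v \<in> pos_roots n")
      case False thus ?thesis using \<open>_ \<Longrightarrow> v \<in> pos_roots n\<close> by blast
    next
      case True
      then obtain x y where xy: "x \<in> II n" "y \<in> II n" "x \<noteq> -y" "v = EE (w x) (w y)" "Pp (w x) (w y)"
        using pos_form[OF assms(1)] by blast
      have wz: "w (x0 i) \<in> II n" "w (y0 n i) \<in> II n" "w (x0 i) \<noteq> - w (y0 n i)"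
        using sp_in[OF assms(1)] z sp_negII[OF assms(1) z(1,2)] by auto
      have wxy: "w x \<in> II n" "w y \<in> II n" "w x \<noteq> - w y"
        using sp_in[OF assms(1)] xy sp_negII[OF assms(1) xy(1,2)] by auto
      have eqg: "v = EE (w (x0 i)) (w (y0 n i)) \<longleftrightarrow> (x = x0 i \<and> y = y0 n i) \<or> (x = y0 n i \<and> y = x0 i)"
      proof
        assume "v = EE (w (x0 i)) (w (y0 n i))"
        from EE_inj[OF wxy(1,2) wz(1,2) wxy(3) wz(3)] this xy(4)
        show "(x = x0 i \<and> y = y0 n i) \<or> (x = y0 n i \<and> y = x0 i)"
          using sp_inj[OF assms(1)] xy(1,2) z(1,2) by metis
      qed (use xy(4) EE_sym in auto)
      have neg: "\<not> ((x = - x0 i \<and> y = - y0 n i) \<or> (x = - y0 n i \<and> y = - x0 i))"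
      proof
        assume h: "(x = - x0 i \<and> y = - y0 n i) \<or> (x = - y0 n i \<and> y = - x0 i)"
        have "Pp (w (- x0 i)) (w (- y0 n i))"
          using h xy(5) Pp_sym[OF wxy(3)] by auto
        thus False using Pp_neg[OF wz(3) sp_nz[OF assms(1) z(1)] sp_nz[OF assms(1) z(2)]] assms(4)
          sp_odd[OF assms(1)] by simp
      qed
      have ne: "x0 i \<noteq> - x0 i" "y0 n i \<noteq> - y0 n i" using z II_nz by auto
      show ?thesis
        unfolding insert_iff xy(4)[symmetric] eqg
        using PhiMem_s[OF assms(1,2,3) xy(1,2,3)] PhiMem[OF assms(1) xy(1,2,3)] xy(4,5)
          sP[OF assms(2,3) xy(1,2,3)] neg Pp_x0y0[OF assms(2,3)]
        by (auto simp del: x0_def)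
    qed

  qed
qed

lemma s_x0: "1 \<le> i \<Longrightarrow> i \<le> n \<Longrightarrow> simple_refl n i (x0 i) = - y0 n i"
  unfolding simple_refl_def x0_def y0_def by auto
lemma s_y0: "1 \<le> i \<Longrightarrow> i \<le> n \<Longrightarrow> simple_refl n i (y0 n i) = - x0 i"
  unfolding simple_refl_def x0_def y0_def by auto

lemma Phi_down: assumes "sp n w" "1 \<le> i" "i \<le> n" "\<not> Pp (w (x0 i)) (w (y0 n i))"
  shows "Phi n w = insert (EE (w (- x0 i)) (w (- y0 n i))) (Phi n (w \<circ> simple_refl n i))"
    "EE (w (- x0 i)) (w (- y0 n i)) \<notin> Phi n (w \<circ> simple_refl n i)"
proof -
  note z = x0y0[OF assms(2,3)]
  let ?w = "w \<circ> simple_refl n i"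
  have sp2: "sp n ?w" using sp_comp[OF assms(1) sr_sp[OF assms(2,3)]] .
  have e1: "?w (x0 i) = w (- y0 n i)" "?w (y0 n i) = w (- x0 i)"
    using s_x0[OF assms(2,3)] s_y0[OF assms(2,3)] by auto
  have wz: "w (x0 i) \<noteq> - w (y0 n i)" using sp_negII[OF assms(1) z(1,2)] z(3) by auto
  have "Pp (w (- x0 i)) (w (- y0 n i))"
    using Pp_neg[OF wz sp_nz[OF assms(1) z(1)] sp_nz[OF assms(1) z(2)]] assms(4) sp_odd[OF assms(1)] by simp
  hence P: "Pp (?w (x0 i)) (?w (y0 n i))" unfolding e1
    using Pp_sym[of "w (- x0 i)" "w (- y0 n i)"] wz sp_odd[OF assms(1)] by auto
  note u = Phi_up[OF sp2 assms(2,3) P]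
  have ww: "?w \<circ> simple_refl n i = w" using sr_invol'[OF assms(2,3)] .
  show "Phi n w = insert (EE (w (- x0 i)) (w (- y0 n i))) (Phi n ?w)"
    using u(1) unfolding ww e1 by (metis EE_sym)
  show "EE (w (- x0 i)) (w (- y0 n i)) \<notin> Phi n ?w"
    using u(2) unfolding e1 by (metis EE_sym)
qed

lemma card_up: "sp n w \<Longrightarrow> 1 \<le> i \<Longrightarrow> i \<le> n \<Longrightarrow> Pp (w (x0 i)) (w (y0 n i)) \<Longrightarrow>
  card (Phi n (w \<circ> simple_refl n i)) = Suc (card (Phi n w))"
  using Phi_up[of n w i] Phi_finite by (metis card_insert_disjoint)

lemma card_down: "sp n w \<Longrightarrow> 1 \<le> i \<Longrightarrow> i \<le> n \<Longrightarrow> \<not> Pp (w (x0 i)) (w (y0 n i)) \<Longrightarrow>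
  card (Phi n w) = Suc (card (Phi n (w \<circ> simple_refl n i)))"
  using Phi_down[of n w i] Phi_finite by (metis card_insert_disjoint)

lemma word_snoc_aux: "foldr (\<lambda>i acc. simple_refl n i \<circ> acc) is a = foldr (\<lambda>i acc. simple_refl n i \<circ> acc) is id \<circ> a"
  by (induction "is") auto

lemma word_snoc: "word_elem n (is @ [i]) = word_elem n is \<circ> simple_refl n i"
  unfolding word_elem_def using word_snoc_aux[of n "is" "simple_refl n i \<circ> id"] by simp

lemma word_sp: "set is \<subseteq> {1..n} \<Longrightarrow> sp n (word_elem n is)"
proof (induction "is" rule: rev_induct)
  case Nil have "word_elem n [] = id" by (simp add: word_elem_def)
    thus ?case using sp_id by metis
next
  case (snoc i "is") 
  hence "sp n (word_elem n is)" "1 \<le> i" "i \<le> n" by auto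
  thus ?case unfolding word_snoc using sp_comp sr_sp by blast
qed

lemma Phi_id: "Phi n id = {}"
proof -
  have "v \<notin> Phi n id" for v
  proof
    assume v: "v \<in> Phi n id"
    then obtain x y where "x \<in> II n" "y \<in> II n" "x \<noteq> -y" "v = EE (id x) (id y)" "Pp (id x) (id y)"
      using pos_form[OF sp_id, of v n] Phi_pos by blast
    thus False using PhiMem[OF sp_id, of x n y] v by simp
  qed
  thus ?thesis by blast
qed

lemma card_le_word: "set is \<subseteq> {1..n} \<Longrightarrow> card (Phi n (word_elem n is)) \<le> length is"
proof (induction "is" rule: rev_induct)
  case Nil have "word_elem n [] = id" by (simp add: word_elem_def)
    thus ?case using Phi_id by (metis card.empty le_refl list.size(3))
next
  case (snoc i "is")
  hence i: "1 \<le> i" "i \<le> n" and sp: "sp n (word_elem n is)" using word_sp by auto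
  have ih: "card (Phi n (word_elem n is)) \<le> length is" using snoc by auto
  have "card (Phi n (word_elem n is \<circ> simple_refl n i)) \<le> Suc (length is)"
  proof (cases "Pp (word_elem n is (x0 i)) (word_elem n is (y0 n i))")
    case True thus ?thesis using ih card_up[OF sp i] by linarith
  next
    case False thus ?thesis using ih card_down[OF sp i] by linarith
  qed
  thus ?case unfolding word_snoc length_append_singleton .
qed

lemma descent: assumes sp: "sp n w" and P: "\<forall>i. 1 \<le> i \<and> i \<le> n \<longrightarrow> Pp (w (x0 i)) (w (y0 n i))"
  shows "w = id"
proof -
  have step: "0 < w (int j) \<and> w (int j) < w (int j + 1)" if "0 < w (int j + 1)" "1 \<le> j" "j < n" for j
  proof -
    have j: "int j \<in> II n" "int j + 1 \<in> II n" using that by (auto simp: II_def)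
    have "Pp (w (int j)) (- w (int j + 1))" using P[rule_format, of j] that sp_odd[OF sp, of "int j + 1"]
      unfolding x0_def y0_def by simp
    moreover have "w (int j) \<noteq> w (int j + 1)" using sp_inj[OF sp j] by simp
    ultimately show ?thesis using that(1) unfolding Pp_def by (auto split: if_splits)
  qed
  have pos: "0 < w (int (n - k))" if "k < n" for k
    using that
  proof (induction k)
    case 0
    thus ?case using P[rule_format, of n] unfolding x0_def y0_def Pp_def by simp
  next
    case (Suc k)
    have e: "int (n - Suc k) + 1 = int (n - k)" using Suc.prems by simp
    show ?case using step[of "n - Suc k"] Suc e by simp
  qed
  have pos': "0 < w (int j)" if "1 \<le> j" "j \<le> n" for j
    using pos[of "n - j"] that by simp
  have inc: "w (int j) < w (int j + 1)" if "1 \<le> j" "j < n" for j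
  proof -
    have "0 < w (int j + 1)" using pos'[of "j+1"] that by (simp add: add.commute)
    thus ?thesis using step[of j] that by simp
  qed
  have dn: "w (int (n - k)) \<le> int (n - k)" if "k < n" for k
    using that
  proof (induction k)
    case 0
    thus ?case using sp_in[OF sp, of "int n"] by (auto simp: II_def)
  next
    case (Suc k)
    have e: "int (n - Suc k) + 1 = int (n - k)" using Suc.prems by simp
    have "w (int (n - Suc k)) < w (int (n - k))" using inc[of "n - Suc k"] Suc.prems e by simp
    moreover have "w (int (n - k)) \<le> int (n - k)" using Suc by simp
    ultimately show ?case using e by linarith
  qed
  have up: "int j \<le> w (int j)" if "1 \<le> j" "j \<le> n" for j
    using that
  proof (induction j)
    case 0 thus ?case by simp
  next
    case (Suc j)
    show ?case
    proof (cases "j = 0")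
      case True thus ?thesis using pos'[of 1] Suc by simp
    next
      case False
      hence "int j \<le> w (int j)" "w (int j) < w (int j + 1)" using Suc inc[of j] by auto
      thus ?thesis by (simp add: add.commute)
    qed
  qed
  have eqp: "w (int j) = int j" if "1 \<le> j" "j \<le> n" for j
    using up[OF that] dn[of "n - j"] that by simp
  show ?thesis
  proof (rule ext)
    fix x
    show "w x = id x"
    proof (cases "x \<in> II n")
      case False thus ?thesis using sp_out[OF sp] by simp
    next
      case True
      show ?thesis
      proof (cases "0 < x")
        case True thus ?thesis using eqp[of "nat x"] \<open>x \<in> II n\<close> by (auto simp: II_def)
      next
        case False
        hence "w (-x) = -x" using eqp[of "nat (-x)"] \<open>x \<in> II n\<close> by (auto simp: II_def)
        thus ?thesis using sp_odd[OF sp, of x] by simp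
      qed
    qed
  qed
qed

lemma exists_word: "sp n w \<Longrightarrow> \<exists>is. set is \<subseteq> {1..n} \<and> length is = card (Phi n w) \<and> word_elem n is = w"
proof (induction "card (Phi n w)" arbitrary: w)
  case 0
  have "w = id"
  proof (rule descent[OF 0(2)], rule ccontr)
    assume "\<not> (\<forall>i. 1 \<le> i \<and> i \<le> n \<longrightarrow> Pp (w (x0 i)) (w (y0 n i)))"
    then obtain i where "1 \<le> i" "i \<le> n" "\<not> Pp (w (x0 i)) (w (y0 n i))" by blast
    from card_down[OF 0(2) this] 0(1) show False by simp
  qed
  thus ?case using 0(1) by (intro exI[of _ "[]"]) (simp add: word_elem_def)
next
  case (Suc N)
  have "w \<noteq> id" using Suc(2) Phi_id by (metis card.empty nat.distinct(1))
  then obtain i where i: "1 \<le> i" "i \<le> n" "\<not> Pp (w (x0 i)) (w (y0 n i))" using descent[OF Suc(3)] by blast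
  let ?w = "w \<circ> simple_refl n i"
  have c: "N = card (Phi n ?w)" using card_down[OF Suc(3) i] Suc(2) by simp
  obtain "is" where "is": "set is \<subseteq> {1..n}" "length is = card (Phi n ?w)" "word_elem n is = ?w"
    using Suc(1)[OF c sp_comp[OF Suc(3) sr_sp[OF i(1,2)]]] by blast
  show ?case
    using "is" i c Suc(2) sr_invol'[OF i(1,2), of w] by (intro exI[of _ "is @ [i]"]) (simp add: word_snoc)
qed

lemma sp_weyl: "sp n w \<Longrightarrow> w \<in> weyl n"
  using exists_word[of n w] unfolding weyl_def by blast

lemma weyl_sp: "w \<in> weyl n \<Longrightarrow> sp n w"
  unfolding weyl_def using word_sp by blast

lemma len_eq: assumes "sp n w" shows "len n w = card (Phi n w)"
  unfolding len_def
proof (rule Least_equality)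
  show "\<exists>is. set is \<subseteq> {1..n} \<and> length is = card (Phi n w) \<and> word_elem n is = w"
    using exists_word[OF assms] .
next
  fix k assume "\<exists>is. set is \<subseteq> {1..n} \<and> length is = k \<and> word_elem n is = w"
  thus "card (Phi n w) \<le> k" using card_le_word by blast
qed




definition FF :: "bool list \<Rightarrow> nat \<Rightarrow> nat list" where
  "FF d p = filter (\<lambda>j. d ! (j - 1)) [1..<Suc p]"
definition c1 :: "bool list \<Rightarrow> nat \<Rightarrow> nat" where "c1 d p = length (FF d p)"
definition c0 :: "bool list \<Rightarrow> nat \<Rightarrow> nat" where "c0 d p = p - c1 d p"

lemma FF_0[simp]: "FF d 0 = []" by (simp add: FF_def)
lemma FF_Suc: "FF d (Suc p) = FF d p @ (if d ! p then [Suc p] else [])"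
  by (simp add: FF_def)

lemma c1_0[simp]: "c1 d 0 = 0" by (simp add: c1_def)
lemma c1_Suc: "c1 d (Suc p) = c1 d p + (if d ! p then 1 else 0)"
  by (simp add: c1_def FF_Suc)
lemma c1_le: "c1 d p \<le> p" by (induction p) (auto simp: c1_Suc)
lemma c0_Suc: "c0 d (Suc p) = c0 d p + (if d ! p then 0 else 1)"
  using c1_le[of d p] by (simp add: c0_def c1_Suc)
lemma c01: "c0 d p + c1 d p = p" using c1_le[of d p] by (simp add: c0_def)

lemma c1_mono: "p \<le> q \<Longrightarrow> c1 d p \<le> c1 d q"
  by (induction q) (auto simp: c1_Suc le_Suc_eq)
lemma c0_mono: "p \<le> q \<Longrightarrow> c0 d p \<le> c0 d q"
  by (induction q) (auto simp: c0_Suc le_Suc_eq)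

lemma c1_strict: assumes "p < q" "d ! (q - 1)" shows "c1 d p < c1 d q"
proof -
  obtain r where q: "q = Suc r" "p \<le> r" using assms(1) by (cases q) auto
  show ?thesis using c1_mono[OF q(2), of d] assms(2) q by (simp add: c1_Suc)
qed
lemma c0_strict: assumes "p < q" "\<not> d ! (q - 1)" shows "c0 d p < c0 d q"
proof -
  obtain r where q: "q = Suc r" "p \<le> r" using assms(1) by (cases q) auto
  show ?thesis using c0_mono[OF q(2), of d] assms(2) q by (simp add: c0_Suc)
qed
lemma c1_pos: "1 \<le> p \<Longrightarrow> d ! (p - 1) \<Longrightarrow> 1 \<le> c1 d p"
  using c1_strict[of 0 p d] by simp
lemma c0_pos: "1 \<le> p \<Longrightarrow> \<not> d ! (p - 1) \<Longrightarrow> 1 \<le> c0 d p"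
  using c0_strict[of 0 p d] by (simp add: c0_def)

lemma ones_FF: "ones n d = FF d n" by (simp add: ones_def FF_def)

lemma FF_prefix: "p \<le> q \<Longrightarrow> \<exists>G. FF d q = FF d p @ G"
  by (induction q) (auto simp: FF_Suc le_Suc_eq)

lemma ones_nth: assumes "1 \<le> p" "p \<le> n" "d ! (p - 1)"
  shows "1 \<le> c1 d p" "ones n d ! (c1 d p - 1) = p"
proof -
  show c: "1 \<le> c1 d p" using c1_pos[OF assms(1,3)] .
  obtain r where r: "p = Suc r" using assms(1) by (cases p) auto
  have "FF d p = FF d r @ [p]" using assms(3) r by (simp add: FF_Suc)
  moreover obtain G where "FF d n = FF d p @ G" using FF_prefix[OF assms(2)] by blast
  ultimately have "ones n d = FF d r @ [p] @ G" by (simp add: ones_FF)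
  moreover have "c1 d p - 1 = length (FF d r)" using assms(3) r by (simp add: c1_def FF_Suc)
  ultimately show "ones n d ! (c1 d p - 1) = p" by (simp add: nth_append)
qed

lemma ones_len: "length (ones n d) = c1 d n" by (simp add: ones_FF c1_def)

lemma ones_nth2: assumes "1 \<le> m" "m \<le> length (ones n d)"
  shows "\<exists>p. 1 \<le> p \<and> p \<le> n \<and> d ! (p - 1) \<and> c1 d p = m \<and> ones n d ! (m - 1) = p"
  using assms unfolding ones_len
proof (induction n)
  case 0 thus ?case by simp
next
  case (Suc n)
  show ?case
  proof (cases "m \<le> c1 d n")
    case True
    then obtain p where p: "1 \<le> p" "p \<le> n" "d ! (p - 1)" "c1 d p = m" using Suc by blast
    thus ?thesis using ones_nth[of p "Suc n" d] by (intro exI[of _ p]) auto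
  next
    case False
    hence "d ! n" "m = c1 d (Suc n)" using Suc.prems by (auto simp: c1_Suc split: if_splits)
    thus ?thesis using ones_nth[of "Suc n" "Suc n" d] by (intro exI[of _ "Suc n"]) auto
  qed
qed

definition fd :: "nat \<Rightarrow> bool list \<Rightarrow> nat \<Rightarrow> int" where
  "fd n d j = (if d ! (j - 1) then - int (n + 1 - c1 d j) else int (c0 d j))"

definition wd :: "nat \<Rightarrow> bool list \<Rightarrow> int \<Rightarrow> int" where
  "wd n d x = (if 0 < x \<and> x \<le> int n then fd n d (nat x)
     else if 0 < -x \<and> -x \<le> int n then - fd n d (nat (-x)) else x)"

lemma wd_pos: "1 \<le> j \<Longrightarrow> j \<le> n \<Longrightarrow> wd n d (int j) = fd n d j" by (simp add: wd_def)
lemma wd_neg: "1 \<le> j \<Longrightarrow> j \<le> n \<Longrightarrow> wd n d (- int j) = - fd n d j" by (simp add: wd_def)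

lemma fd_sign: assumes "1 \<le> j" "j \<le> n"
  shows "(0 < fd n d j) = (\<not> d ! (j - 1))" "(fd n d j < 0) = d ! (j - 1)"
    "1 \<le> \<bar>fd n d j\<bar>" "\<bar>fd n d j\<bar> \<le> int n"
  using c1_pos[OF assms(1), of d] c0_pos[OF assms(1), of d] c1_le[of d j] c01[of d j] assms
  unfolding fd_def by auto

lemma fd_abs_inj: assumes "1 \<le> p" "p \<le> n" "1 \<le> q" "q \<le> n" "\<bar>fd n d p\<bar> = \<bar>fd n d q\<bar>"
  shows "p = q"
proof (rule ccontr)
  assume ne: "p \<noteq> q"
  have key: False if "a < b" "1 \<le> a" "b \<le> n" "\<bar>fd n d a\<bar> = \<bar>fd n d b\<bar>" for a b
  proof -
    have m1: "c1 d a \<le> c1 d b" "c0 d a \<le> c0 d b" using c1_mono c0_mono that(1) by auto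
    have s: "c0 d a + c1 d a = a" "c0 d b + c1 d b = b" using c01 by auto
    show False
    proof (cases "d ! (a - 1)"; cases "d ! (b - 1)")
      assume "d ! (a - 1)" "d ! (b - 1)"
      thus False using that c1_strict[OF that(1), of d] c1_le[of d a] c1_le[of d b] unfolding fd_def by auto
    next
      assume "\<not> d ! (a - 1)" "\<not> d ! (b - 1)"
      thus False using that c0_strict[OF that(1), of d] unfolding fd_def by auto
    next
      assume "d ! (a - 1)" "\<not> d ! (b - 1)"
      thus False using that m1 s c1_le[of d a] unfolding fd_def by auto
    next
      assume "\<not> d ! (a - 1)" "d ! (b - 1)"
      thus False using that m1 s c1_le[of d b] unfolding fd_def by auto
    qed
  qed
  show False
  proof (cases "p < q")
    case True thus False using key[of p q] assms by auto
  next
    case False thus False using key[of q p] assms ne by auto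
  qed
qed

lemma wd_sp: "sp n (wd n d)"
proof -
  have odd: "\<forall>x. wd n d (-x) = - wd n d x" unfolding wd_def by auto
  have out: "\<forall>x. x \<notin> II n \<longrightarrow> wd n d x = x" unfolding wd_def II_def by auto
  have abs: "\<bar>wd n d x\<bar> = \<bar>fd n d (nat \<bar>x\<bar>)\<bar>" if "x \<in> II n" for x
    using that unfolding wd_def II_def by (auto simp: abs_if)
  have sg: "(0 < wd n d x) = ((0 < x) = (0 < fd n d (nat \<bar>x\<bar>)))" if "x \<in> II n" for x
    using that fd_sign[of "nat \<bar>x\<bar>" n d] unfolding wd_def II_def by (auto simp: abs_if)
  have inn: "\<forall>x\<in>II n. wd n d x \<in> II n"
  proof
    fix x assume x: "x \<in> II n"
    thus "wd n d x \<in> II n" using abs[OF x] fd_sign[of "nat \<bar>x\<bar>" n d] unfolding II_def by auto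
  qed
  have inj: "inj_on (wd n d) (II n)"
  proof (rule inj_onI)
    fix x y assume x: "x \<in> II n" and y: "y \<in> II n" and e: "wd n d x = wd n d y"
    have "nat \<bar>x\<bar> = nat \<bar>y\<bar>"
    proof (rule fd_abs_inj[of "nat \<bar>x\<bar>" n "nat \<bar>y\<bar>" d])
      show "\<bar>fd n d (nat \<bar>x\<bar>)\<bar> = \<bar>fd n d (nat \<bar>y\<bar>)\<bar>" using abs[OF x] abs[OF y] e by simp
    qed (use x y in \<open>auto simp: II_def\<close>)
    moreover have "(0 < x) = (0 < y)" using sg[OF x] sg[OF y] e \<open>nat \<bar>x\<bar> = nat \<bar>y\<bar>\<close> by auto
    ultimately show "x = y" using x y unfolding II_def by (auto simp: abs_if split: if_splits)
  qed
  show ?thesis unfolding sp_def using odd out inn inj by blast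
qed




lemma Delta_char: "Delta_u n = {EE a b | a b. a \<in> II n \<and> b \<in> II n \<and> 0 < a \<and> 0 < b}"
proof (rule set_eqI, rule iffI)
  fix v assume "v \<in> Delta_u n"
  then obtain i j where "1 \<le> i" "i \<le> j" "j \<le> n" "v = root_c i j" unfolding Delta_u_def by blast
  thus "v \<in> {EE a b | a b. a \<in> II n \<and> b \<in> II n \<and> 0 < a \<and> 0 < b}"
    by (intro CollectI exI[of _ "int i"] exI[of _ "int j"]) (auto simp: root_c_EE II_def)
next
  fix v assume "v \<in> {EE a b | a b. a \<in> II n \<and> b \<in> II n \<and> 0 < a \<and> 0 < b}"
  then obtain a b where ab: "v = EE a b" "a \<in> II n" "b \<in> II n" "0 < a" "0 < b" by blast
  show "v \<in> Delta_u n"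
  proof (cases "a \<le> b")
    case True thus ?thesis using ab unfolding Delta_u_def II_def
      by (intro CollectI exI[of _ "nat a"] exI[of _ "nat b"]) (auto simp: root_c_EE)
  next
    case False thus ?thesis using ab unfolding Delta_u_def II_def
      by (intro CollectI exI[of _ "nat b"] exI[of _ "nat a"]) (auto simp: root_c_EE EE_sym)
  qed
qed

lemma Delta_mem: assumes "a \<in> II n" "b \<in> II n" "a \<noteq> -b"
  shows "EE a b \<in> Delta_u n \<longleftrightarrow> 0 < a \<and> 0 < b"
proof
  assume "EE a b \<in> Delta_u n"
  then obtain c e where ce: "EE a b = EE c e" "c \<in> II n" "e \<in> II n" "0 < c" "0 < e"
    unfolding Delta_char by blast
  from EE_inj[OF assms(1,2) ce(2,3) assms(3) _ ce(1)] ce(4,5) show "0 < a \<and> 0 < b" by auto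
qed (use assms in \<open>auto simp: Delta_char\<close>)

definition Sc :: "nat \<Rightarrow> bool list \<Rightarrow> nat \<Rightarrow> nat \<Rightarrow> bool" where
  "Sc n d m r \<longleftrightarrow> 1 \<le> m \<and> m \<le> length (ones n d) \<and> ones n d ! (m - 1) + 1 - m \<le> r \<and> r \<le> n + 1 - m"

lemma S_Sc: "S_set n d = {root_c r (n + 1 - m) | m r. Sc n d m r}"
  unfolding S_set_def Sc_def by auto

lemma S_memI: assumes "Sc n d m r" "v = EE (int r) (int (n + 1 - m))" shows "v \<in> S_set n d"
proof -
  obtain p where p: "1 \<le> p" "p \<le> n" "c1 d p = m" "ones n d ! (m - 1) = p"
    using ones_nth2[of m n d] assms(1) unfolding Sc_def by blast
  have "m \<le> p" using c1_le[of d p] p by simp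
  hence "1 \<le> r" "m \<le> n" using assms(1) ones_len[of n d] c1_le[of d n] p unfolding Sc_def by auto
  hence "v = root_c r (n + 1 - m)" using assms(2) by (simp add: root_c_EE)
  thus ?thesis using assms(1) unfolding S_Sc by blast
qed

lemma caseA: assumes "1 \<le> p" "p < q" "q \<le> n" "Pp (- fd n d p) (fd n d q)"
  shows "EE (- fd n d p) (fd n d q) \<in> S_set n d"
proof -
  have m1: "c1 d p \<le> c1 d q" "c0 d p \<le> c0 d q" using c1_mono c0_mono assms(2) by auto
  have s: "c0 d p + c1 d p = p" "c0 d q + c1 d q = q" using c01 by auto
  have le: "c1 d p \<le> p" "c1 d q \<le> q" using c1_le by auto
  have dp: "d ! (p - 1)" and dq: "\<not> d ! (q - 1)"
  proof -
    have "d ! (p - 1) \<and> \<not> d ! (q - 1)"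
    proof (cases "d ! (p - 1)"; cases "d ! (q - 1)")
      assume "\<not> d ! (p - 1)" "\<not> d ! (q - 1)"
      thus ?thesis using assms(4) c0_strict[OF assms(2), of d] by (auto simp: fd_def Pp_def split: if_splits)
    next
      assume "\<not> d ! (p - 1)" "d ! (q - 1)"
      thus ?thesis using assms m1 s le by (auto simp: fd_def Pp_def split: if_splits)
    next
      assume "d ! (p - 1)" "d ! (q - 1)"
      thus ?thesis using assms c1_strict[OF assms(2), of d] le by (auto simp: fd_def Pp_def split: if_splits)
    qed simp
    thus "d ! (p - 1)" "\<not> d ! (q - 1)" by auto
  qed
  have on: "ones n d ! (c1 d p - 1) = p" "1 \<le> c1 d p" using ones_nth[of p n d] assms dp by auto
  have st: "c0 d p < c0 d q" using c0_strict[OF assms(2) dq] .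
  have "Sc n d (c1 d p) (c0 d q)" unfolding Sc_def
    using on ones_len[of n d] c1_mono[of p n d] assms st s m1 le by auto
  moreover have "EE (- fd n d p) (fd n d q) = EE (int (c0 d q)) (int (n + 1 - c1 d p))"
    using dp dq le assms unfolding fd_def by (simp add: EE_sym of_nat_diff)
  ultimately show ?thesis by (rule S_memI)
qed

lemma caseB: assumes "1 \<le> p" "p \<le> q" "q \<le> n" "Pp (- fd n d p) (- fd n d q)"
  shows "EE (- fd n d p) (- fd n d q) \<in> S_set n d"
proof -
  have m1: "c1 d p \<le> c1 d q" "c0 d p \<le> c0 d q" using c1_mono c0_mono assms(2) by auto
  have s: "c0 d p + c1 d p = p" "c0 d q + c1 d q = q" using c01 by auto
  have le: "c1 d p \<le> p" "c1 d q \<le> q" using c1_le by auto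
  have dp: "d ! (p - 1)" and dq: "d ! (q - 1)"
  proof -
    have "d ! (p - 1) \<and> d ! (q - 1)"
    proof (cases "d ! (p - 1)"; cases "d ! (q - 1)")
      assume "\<not> d ! (p - 1)" "\<not> d ! (q - 1)"
      thus ?thesis using assms(4) by (auto simp: fd_def Pp_def split: if_splits)
    next
      assume "\<not> d ! (p - 1)" "d ! (q - 1)"
      thus ?thesis using assms m1 s le by (auto simp: fd_def Pp_def split: if_splits)
    next
      assume "d ! (p - 1)" "\<not> d ! (q - 1)"
      thus ?thesis using assms m1 s le by (auto simp: fd_def Pp_def split: if_splits)
    qed simp
    thus "d ! (p - 1)" "d ! (q - 1)" by auto
  qed
  have on: "ones n d ! (c1 d p - 1) = p" "1 \<le> c1 d p" using ones_nth[of p n d] assms dp by auto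
  have "Sc n d (c1 d p) (n + 1 - c1 d q)" unfolding Sc_def
    using on ones_len[of n d] c1_mono[of p n d] assms s m1 le by auto
  moreover have "EE (- fd n d p) (- fd n d q) = EE (int (n + 1 - c1 d q)) (int (n + 1 - c1 d p))"
    using dp dq le assms unfolding fd_def by (simp add: EE_sym of_nat_diff)
  ultimately show ?thesis by (rule S_memI)
qed

lemma Phi_sub_aux: assumes "x \<in> II n" "y \<in> II n" "x \<noteq> -y" "\<bar>x\<bar> \<le> \<bar>y\<bar>"
  "Pp (wd n d x) (wd n d y)" "\<not> Pp x y"
  shows "EE (wd n d x) (wd n d y) \<in> S_set n d"
proof -
  have xn: "x < 0" using assms(4,6) II_nz[OF assms(1)] unfolding Pp_def by auto
  define p where "p = nat (-x)"
  have p: "1 \<le> p" "p \<le> n" "x = - int p" using assms(1) xn unfolding p_def II_def by auto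
  have wx: "wd n d x = - fd n d p" using wd_neg[OF p(1,2)] p(3) by simp
  show ?thesis
  proof (cases "0 < y")
    case True
    define q where "q = nat y"
    have q: "1 \<le> q" "q \<le> n" "y = int q" using assms(2) True unfolding q_def II_def by auto
    have "p < q" using assms(3,4) p(3) q(3) by auto
    thus ?thesis using caseA[of p q n d] p q wx wd_pos[OF q(1,2)] assms(5) by simp
  next
    case False
    define q where "q = nat (-y)"
    have q: "1 \<le> q" "q \<le> n" "y = - int q" using assms(2) False unfolding q_def II_def by auto
    have "p \<le> q" using assms(4) p(3) q(3) by auto
    thus ?thesis using caseB[of p q n d] p q wx wd_neg[OF q(1,2)] assms(5) by simp
  qed
qed

lemma Phi_wd: "Phi n (wd n d) = S_set n d"
proof (rule set_eqI, rule iffI)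
  fix v assume v: "v \<in> Phi n (wd n d)"
  then obtain x y where xy: "x \<in> II n" "y \<in> II n" "x \<noteq> -y" "v = EE (wd n d x) (wd n d y)" "Pp (wd n d x) (wd n d y)"
    using pos_form[OF wd_sp] Phi_pos by blast
  have np: "\<not> Pp x y" using PhiMem[OF wd_sp xy(1,2,3)] v xy(4) by simp
  have wne: "wd n d x \<noteq> - wd n d y" using sp_negII[OF wd_sp xy(1,2)] xy(3) by simp
  show "v \<in> S_set n d"
  proof (cases "\<bar>x\<bar> \<le> \<bar>y\<bar>")
    case True thus ?thesis using Phi_sub_aux[OF xy(1,2,3) True xy(5) np] xy(4) by simp
  next
    case False
    have "EE (wd n d y) (wd n d x) \<in> S_set n d"
      using Phi_sub_aux[OF xy(2,1) _ _ _ _, of d] xy(3,5) np False Pp_sym[OF xy(3)] Pp_sym[OF wne] by auto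
    thus ?thesis using xy(4) EE_sym by metis
  qed
next
  fix v assume "v \<in> S_set n d"
  then obtain m r where mr: "v = root_c r (n + 1 - m)" "Sc n d m r" unfolding S_Sc by blast
  obtain p where p: "1 \<le> p" "p \<le> n" "d ! (p - 1)" "c1 d p = m" "ones n d ! (m - 1) = p"
    using ones_nth2[of m n d] mr(2) unfolding Sc_def by blast
  have mp: "m \<le> p" using c1_le[of d p] p by simp
  have r: "1 \<le> r" "r \<le> n" "p + 1 - m \<le> r" "r \<le> n + 1 - m" using mr(2) p mp unfolding Sc_def by auto
  have v2: "v = EE (int r) (int (n + 1 - m))" using mr(1) r mp p by (simp add: root_c_EE)
  have wp: "wd n d (- int p) = int (n + 1 - m)" using wd_neg[OF p(1,2)] p(3,4) mp unfolding fd_def by simp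
  have rI: "int r \<in> II n" using r unfolding II_def by auto
  obtain q where q: "q \<in> II n" "wd n d q = int r" using sp_ex[OF wd_sp rI] by blast
  have pI: "- int p \<in> II n" using p unfolding II_def by auto
  have qp: "q \<noteq> int p" and npq: "\<not> Pp q (- int p)"
  proof -
    have "q \<noteq> int p \<and> \<not> Pp q (- int p)"
    proof (cases "0 < q")
      case True
      define q' where "q' = nat q"
      have q': "1 \<le> q'" "q' \<le> n" "q = int q'" using q(1) True unfolding q'_def II_def by auto
      have fq: "fd n d q' = int r" using q(2) wd_pos[OF q'(1,2)] q'(3) by simp
      hence dq: "\<not> d ! (q' - 1)" "c0 d q' = r" using fd_sign[OF q'(1,2), of d] r(1) unfolding fd_def
        by (auto split: if_splits)
      have "c0 d p = p - m" using c01[of d p] p(4) by simp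
      hence "c0 d p < c0 d q'" using dq r(3) mp by simp
      hence "p < q'" using c0_mono[of q' p d] by (meson not_le)
      thus ?thesis using q'(3) unfolding Pp_def by auto
    next
      case False
      thus ?thesis using p(1) q(1) II_nz[of q n] unfolding Pp_def by auto
    qed
    thus "q \<noteq> int p" "\<not> Pp q (- int p)" by auto
  qed
  have mn: "m \<le> n" using mp p by simp
  have "Pp (wd n d q) (wd n d (- int p))" using q(2) wp r mn unfolding Pp_def by auto
  hence "EE (wd n d q) (wd n d (- int p)) \<in> Phi n (wd n d)"
    using PhiMem[OF wd_sp[of n d] q(1) pI] qp npq by auto
  thus "v \<in> Phi n (wd n d)" using v2 q(2) wp by simp
qed




lemma c1_card: "c1 d j = card {q \<in> {1..j}. d ! (q - 1)}"
proof (induction j)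
  case 0 thus ?case by simp
next
  case (Suc j)
  have "{q \<in> {1..Suc j}. d ! (q - 1)} = {q \<in> {1..j}. d ! (q - 1)} \<union> (if d ! j then {Suc j} else {})"
    by (auto simp: le_Suc_eq)
  thus ?case using Suc by (simp add: c1_Suc)
qed

lemma c0_card: "c0 d j = card {q \<in> {1..j}. \<not> d ! (q - 1)}"
proof (induction j)
  case 0 thus ?case by (simp add: c0_def)
next
  case (Suc j)
  have "{q \<in> {1..Suc j}. \<not> d ! (q - 1)} = {q \<in> {1..j}. \<not> d ! (q - 1)} \<union> (if d ! j then {} else {Suc j})"
    by (auto simp: le_Suc_eq)
  thus ?case using Suc by (simp add: c0_Suc)
qed

definition sgnpat :: "nat \<Rightarrow> (int \<Rightarrow> int) \<Rightarrow> bool list" where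
  "sgnpat n w = map (\<lambda>j. w (int j) < 0) [1..<Suc n]"

lemma sgnpat_len: "length (sgnpat n w) = n" by (simp add: sgnpat_def)
lemma sgnpat_nth: "1 \<le> j \<Longrightarrow> j \<le> n \<Longrightarrow> sgnpat n w ! (j - 1) = (w (int j) < 0)"
proof -
  assume "1 \<le> j" "j \<le> n"
  hence "[1..<Suc n] ! (j - 1) = j" using nth_upt[of 1 "j - 1" "Suc n"] by simp
  thus ?thesis using \<open>1 \<le> j\<close> \<open>j \<le> n\<close> unfolding sgnpat_def by (simp del: upt_Suc)
qed

lemma Wp_conds: assumes sp: "sp n w" and D: "Phi n w \<subseteq> Delta_u n"
  and pq: "1 \<le> p" "p < q" "q \<le> n"
  shows "0 < w (int p) \<Longrightarrow> 0 < w (int q) \<Longrightarrow> w (int p) < w (int q)"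
    "w (int p) < 0 \<Longrightarrow> w (int q) < 0 \<Longrightarrow> w (int p) < w (int q)"
    "0 < w (int p) \<Longrightarrow> w (int q) < 0 \<Longrightarrow> \<bar>w (int p)\<bar> < \<bar>w (int q)\<bar>"
    "w (int p) < 0 \<Longrightarrow> 0 < w (int q) \<Longrightarrow> \<bar>w (int q)\<bar> < \<bar>w (int p)\<bar>"
proof -
  have I: "- int p \<in> II n" "int q \<in> II n" "- int q \<in> II n" "int p \<in> II n" using pq by (auto simp: II_def)
  have wI: "w (- int p) \<in> II n" "w (int q) \<in> II n" "w (- int q) \<in> II n" using sp_in[OF sp] I by auto
  have ne: "w (int p) \<noteq> w (int q)" using sp_inj[OF sp I(4) I(2)] pq by simp
  have ne2: "w (- int p) \<noteq> - w (int q)" "w (- int p) \<noteq> - w (- int q)"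
    using sp_negII[OF sp I(1) I(2)] sp_negII[OF sp I(1) I(3)] pq by auto
  have c1: "\<not> Pp (w (- int p)) (w (int q)) \<or> (0 < w (- int p) \<and> 0 < w (int q))"
  proof (cases "Pp (w (- int p)) (w (int q))")
    case True
    have "\<not> Pp (- int p) (int q)" using pq unfolding Pp_def by auto
    hence "EE (w (- int p)) (w (int q)) \<in> Phi n w" using PhiMem[OF sp I(1,2)] True pq by auto
    thus ?thesis using D Delta_mem[OF wI(1,2) ne2(1)] by auto
  qed simp
  have c2: "\<not> Pp (w (- int p)) (w (- int q)) \<or> (0 < w (- int p) \<and> 0 < w (- int q))"
  proof (cases "Pp (w (- int p)) (w (- int q))")
    case True
    have "\<not> Pp (- int p) (- int q)" using pq unfolding Pp_def by auto
    hence "EE (w (- int p)) (w (- int q)) \<in> Phi n w" using PhiMem[OF sp I(1,3)] True pq by auto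
    thus ?thesis using D Delta_mem[OF wI(1,3) ne2(2)] by auto
  qed simp
  note o = sp_odd[OF sp, of "int p"] sp_odd[OF sp, of "int q"]
  show "0 < w (int p) \<Longrightarrow> 0 < w (int q) \<Longrightarrow> w (int p) < w (int q)"
    using c1 ne o unfolding Pp_def by (auto split: if_splits)
  show "w (int p) < 0 \<Longrightarrow> w (int q) < 0 \<Longrightarrow> w (int p) < w (int q)"
    using c1 ne o unfolding Pp_def by (auto split: if_splits)
  show "0 < w (int p) \<Longrightarrow> w (int q) < 0 \<Longrightarrow> \<bar>w (int p)\<bar> < \<bar>w (int q)\<bar>"
    using c2 ne2 o unfolding Pp_def by (auto split: if_splits)
  show "w (int p) < 0 \<Longrightarrow> 0 < w (int q) \<Longrightarrow> \<bar>w (int q)\<bar> < \<bar>w (int p)\<bar>"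
    using c2 ne2 o unfolding Pp_def by (auto split: if_splits)
qed

lemma Wp_vals: assumes sp: "sp n w" and D: "Phi n w \<subseteq> Delta_u n" and j: "1 \<le> j" "j \<le> n"
  shows "w (int j) = fd n (sgnpat n w) j"
proof -
  let ?d = "sgnpat n w"
  note C = Wp_conds[OF sp D]
  have jI: "int j \<in> II n" using j by (auto simp: II_def)
  have wjI: "w (int j) \<in> II n" using sp_in[OF sp jI] .
  have dn: "?d ! (q - 1) = (w (int q) < 0)" if "1 \<le> q" "q \<le> n" for q using sgnpat_nth that by simp
  have nz: "w (int q) \<noteq> 0" if "1 \<le> q" "q \<le> n" for q using sp_nz[OF sp, of "int q"] that by (auto simp: II_def)
  show ?thesis
  proof (cases "0 < w (int j)")
    case pos: True
    let ?Z = "{q \<in> {1..j}. \<not> ?d ! (q - 1)}"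
    have bij: "bij_betw (\<lambda>q. w (int q)) ?Z {1..w (int j)}"
    proof (rule bij_betw_imageI)
      show "inj_on (\<lambda>q. w (int q)) ?Z"
        by (rule inj_onI) (use sp_inj[OF sp] j in \<open>auto simp: II_def\<close>)
      show "(\<lambda>q. w (int q)) ` ?Z = {1..w (int j)}"
      proof (rule set_eqI, rule iffI)
        fix v assume "v \<in> (\<lambda>q. w (int q)) ` ?Z"
        then obtain q where q: "1 \<le> q" "q \<le> j" "\<not> ?d ! (q - 1)" "v = w (int q)" by auto
        have "0 < w (int q)" using q dn[of q] nz[of q] j by auto
        moreover have "w (int q) \<le> w (int j)"
          using C(1)[of q j] q j pos \<open>0 < w (int q)\<close> by (cases "q = j") auto
        ultimately show "v \<in> {1..w (int j)}" using q by auto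
      next
        fix v assume v: "v \<in> {1..w (int j)}"
        have vI: "v \<in> II n" using v wjI by (auto simp: II_def)
        obtain x where x: "x \<in> II n" "w x = v" using sp_ex[OF sp vI] by blast
        show "v \<in> (\<lambda>q. w (int q)) ` ?Z"
        proof (cases "0 < x")
          case False
          define q where "q = nat (-x)"
          have q: "1 \<le> q" "q \<le> n" "x = - int q" using x(1) False unfolding q_def II_def by auto
          have wq: "w (int q) = - v" using x(2) sp_odd[OF sp, of "int q"] q(3) by simp
          have "q \<noteq> j" using wq pos v by auto
          hence False using C(3)[of j q] C(4)[of q j] q j wq pos v by (cases "q < j") auto
          thus ?thesis ..
        next
          case True
          define q where "q = nat x"
          have q: "1 \<le> q" "q \<le> n" "x = int q" using x(1) True unfolding q_def II_def by auto
          have wq: "w (int q) = v" using x(2) q(3) by simp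
          have "q \<le> j" using C(1)[of j q] q j wq pos v by (cases "j < q") auto
          thus ?thesis using q wq v dn[of q] by (intro image_eqI[of _ _ q]) auto
        qed
      qed
    qed
    have "card ?Z = nat (w (int j))" using bij_betw_same_card[OF bij] by simp
    hence "w (int j) = int (c0 ?d j)" using c0_card[of ?d j] pos by simp
    thus ?thesis using dn[OF j] pos unfolding fd_def by simp
  next
    case neg: False
    hence neg': "w (int j) < 0" using nz[OF j] by simp
    let ?O = "{q \<in> {1..j}. ?d ! (q - 1)}"
    have bij: "bij_betw (\<lambda>q. - w (int q)) ?O {- w (int j)..int n}"
    proof (rule bij_betw_imageI)
      show "inj_on (\<lambda>q. - w (int q)) ?O"
        by (rule inj_onI) (use sp_inj[OF sp] j in \<open>auto simp: II_def\<close>)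
      show "(\<lambda>q. - w (int q)) ` ?O = {- w (int j)..int n}"
      proof (rule set_eqI, rule iffI)
        fix v assume "v \<in> (\<lambda>q. - w (int q)) ` ?O"
        then obtain q where q: "1 \<le> q" "q \<le> j" "?d ! (q - 1)" "v = - w (int q)" by auto
        have "w (int q) < 0" using q dn[of q] j by auto
        moreover have "w (int q) \<le> w (int j)"
          using C(2)[of q j] q j neg' \<open>w (int q) < 0\<close> by (cases "q = j") auto
        moreover have "- w (int q) \<le> int n" using sp_in[OF sp, of "int q"] q j by (auto simp: II_def)
        ultimately show "v \<in> {- w (int j)..int n}" using q by auto
      next
        fix v assume v: "v \<in> {- w (int j)..int n}"
        have vI: "- v \<in> II n" using v neg' by (auto simp: II_def)
        obtain x where x: "x \<in> II n" "w x = - v" using sp_ex[OF sp vI] by blast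
        show "v \<in> (\<lambda>q. - w (int q)) ` ?O"
        proof (cases "0 < x")
          case False
          define q where "q = nat (-x)"
          have q: "1 \<le> q" "q \<le> n" "x = - int q" using x(1) False unfolding q_def II_def by auto
          have wq: "w (int q) = v" using x(2) sp_odd[OF sp, of "int q"] q(3) by simp
          have "q \<noteq> j" using wq neg' v by auto
          hence False using C(3)[of q j] C(4)[of j q] q j wq neg' v by (cases "q < j") auto
          thus ?thesis ..
        next
          case True
          define q where "q = nat x"
          have q: "1 \<le> q" "q \<le> n" "x = int q" using x(1) True unfolding q_def II_def by auto
          have wq: "w (int q) = - v" using x(2) q(3) by simp
          have "q \<le> j" using C(2)[of j q] q j wq neg' v by (cases "j < q") auto
          thus ?thesis using q wq v neg' dn[of q] by (intro image_eqI[of _ _ q]) auto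
        qed
      qed
    qed
    have "card ?O = nat (int n + w (int j) + 1)" using bij_betw_same_card[OF bij] by simp
    hence "c1 ?d j = nat (int n + w (int j) + 1)" using c1_card[of ?d j] by simp
    moreover have "c1 ?d j \<le> n" using c1_le[of ?d j] j by simp
    moreover have "- w (int j) \<le> int n" using wjI neg' by (auto simp: II_def)
    ultimately have "int (c1 ?d j) = int n + w (int j) + 1" by simp
    hence "w (int j) = - int (n + 1 - c1 ?d j)" using \<open>c1 ?d j \<le> n\<close> by (simp add: of_nat_diff)
    thus ?thesis using dn[OF j] neg' unfolding fd_def by simp
  qed
qed

lemma Wp_form: assumes sp: "sp n w" and D: "Phi n w \<subseteq> Delta_u n"
  shows "w = wd n (sgnpat n w)"
proof (rule ext)
  fix x
  show "w x = wd n (sgnpat n w) x"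
  proof (cases "x \<in> II n")
    case False thus ?thesis using sp_out[OF sp] sp_out[OF wd_sp] by metis
  next
    case True
    show ?thesis
    proof (cases "0 < x")
      case True
      thus ?thesis using Wp_vals[OF sp D, of "nat x"] wd_pos[of "nat x" n] \<open>x \<in> II n\<close> by (auto simp: II_def)
    next
      case False
      hence "w (- x) = wd n (sgnpat n w) (- x)"
        using Wp_vals[OF sp D, of "nat (-x)"] wd_pos[of "nat (-x)" n] \<open>x \<in> II n\<close> by (auto simp: II_def)
      thus ?thesis using sp_odd[OF sp, of x] sp_odd[OF wd_sp, of n "sgnpat n w" x] by simp
    qed
  qed
qed




lemma root_c_inj: assumes "root_c a b = root_c c e" shows "(a = c \<and> b = e) \<or> (a = e \<and> b = c)"
proof -
  have h: "root_c a b k = root_c c e k" for k using assms by simp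
  show ?thesis using h[of a] h[of b] h[of c] h[of e] unfolding root_c_def by (auto split: if_splits)
qed

lemma S_root_mem: assumes "r \<le> c" "root_c r c \<in> S_set n d" shows "\<exists>m. Sc n d m r \<and> c = n + 1 - m"
proof -
  obtain m r' where mr: "root_c r c = root_c r' (n + 1 - m)" "Sc n d m r'" using assms(2) unfolding S_Sc by blast
  from root_c_inj[OF mr(1)] show ?thesis
  proof
    assume "r = r' \<and> c = n + 1 - m" thus ?thesis using mr(2) by blast
  next
    assume h: "r = n + 1 - m \<and> c = r'"
    hence "r' \<le> n + 1 - m" using mr(2) unfolding Sc_def by simp
    hence "r = r'" "c = n + 1 - m" using h assms(1) by auto
    thus ?thesis using mr(2) by blast
  qed
qed

lemma ones_ge: assumes "1 \<le> m" "m \<le> length (ones n d)" shows "m \<le> ones n d ! (m - 1)" "ones n d ! (m - 1) \<le> n"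
proof -
  obtain p where p: "1 \<le> p" "p \<le> n" "c1 d p = m" "ones n d ! (m - 1) = p" using ones_nth2[OF assms] by blast
  show "m \<le> ones n d ! (m - 1)" "ones n d ! (m - 1) \<le> n" using p c1_le[of d p] by auto
qed

lemma S_k: assumes "1 \<le> m" "m \<le> n" shows "m \<le> length (ones n d) \<longleftrightarrow> root_c (n + 1 - m) (n + 1 - m) \<in> S_set n d"
proof
  assume h: "m \<le> length (ones n d)"
  have "Sc n d m (n + 1 - m)" using ones_ge[OF assms(1) h] h assms unfolding Sc_def by auto
  thus "root_c (n + 1 - m) (n + 1 - m) \<in> S_set n d" unfolding S_Sc by blast
next
  assume "root_c (n + 1 - m) (n + 1 - m) \<in> S_set n d"
  then obtain m' where "Sc n d m' (n + 1 - m)" "n + 1 - m = n + 1 - m'" using S_root_mem by blast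
  moreover have "m' \<le> n" using calculation(1) ones_len[of n d] c1_le[of d n] unfolding Sc_def by simp
  ultimately have "m = m'" using assms by linarith
  thus "m \<le> length (ones n d)" using \<open>Sc n d m' (n + 1 - m)\<close> unfolding Sc_def by simp
qed

lemma ones_mem: "Suc i \<in> set (ones n d) \<longleftrightarrow> Suc i \<le> n \<and> d ! i"
  unfolding ones_def by (simp add: Suc_le_eq del: upt_Suc)

lemma S_inj: assumes "length d = n" "length d' = n" "S_set n d = S_set n d'" shows "d = d'"
proof -
  have kl: "length (ones n d) \<le> n" "length (ones n d') \<le> n" using ones_len c1_le by metis+
  have k: "length (ones n d) = length (ones n d')"
  proof (rule ccontr)
    assume ne: "length (ones n d) \<noteq> length (ones n d')"
    show False
    proof (cases "length (ones n d) < length (ones n d')")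
      case True
      have "root_c (n + 1 - length (ones n d')) (n + 1 - length (ones n d')) \<in> S_set n d'"
        using S_k[of "length (ones n d')" n d'] True kl by simp
      hence "length (ones n d') \<le> length (ones n d)"
        using S_k[of "length (ones n d')" n d] assms(3) True kl by simp
      thus False using True by simp
    next
      case False
      hence "length (ones n d') < length (ones n d)" using ne by simp
      have "root_c (n + 1 - length (ones n d)) (n + 1 - length (ones n d)) \<in> S_set n d"
        using S_k[of "length (ones n d)" n d] \<open>length (ones n d') < length (ones n d)\<close> kl by simp
      hence "length (ones n d) \<le> length (ones n d')"
        using S_k[of "length (ones n d)" n d'] assms(3) \<open>length (ones n d') < length (ones n d)\<close> kl by simp
      thus False using \<open>length (ones n d') < length (ones n d)\<close> by simp
    qed
  qed
  have le: "ones n d' ! (m - 1) \<le> ones n d ! (m - 1)"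
    if "1 \<le> m" "m \<le> length (ones n d)" "length (ones n d) = length (ones n d')" "S_set n d \<subseteq> S_set n d'" for m d d'
  proof -
    have g: "m \<le> ones n d ! (m - 1)" "ones n d ! (m - 1) \<le> n" using ones_ge that by auto
    have "Sc n d m (ones n d ! (m - 1) + 1 - m)" using that g unfolding Sc_def by auto
    hence "root_c (ones n d ! (m - 1) + 1 - m) (n + 1 - m) \<in> S_set n d'" using that(4) unfolding S_Sc by blast
    then obtain m' where "Sc n d' m' (ones n d ! (m - 1) + 1 - m)" "n + 1 - m = n + 1 - m'"
    proof -
      have "ones n d ! (m - 1) + 1 - m \<le> n + 1 - m" using g by simp
      thus ?thesis using S_root_mem[of "ones n d ! (m - 1) + 1 - m" "n + 1 - m" n d'] that
        \<open>root_c (ones n d ! (m - 1) + 1 - m) (n + 1 - m) \<in> S_set n d'\<close> by blast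
    qed
    moreover have "m' \<le> n" using calculation(1) ones_len[of n d'] c1_le[of d' n] unfolding Sc_def by simp
    moreover have "m \<le> n" using g by simp
    ultimately have "m' = m" by linarith
    hence "Sc n d' m (ones n d ! (m - 1) + 1 - m)" using \<open>Sc n d' m' _\<close> by simp
    moreover have "m \<le> ones n d' ! (m - 1)" using ones_ge[of m n d'] that by simp
    ultimately show ?thesis using g unfolding Sc_def by linarith
  qed
  have on: "ones n d = ones n d'"
  proof (rule nth_equalityI)
    show "length (ones n d) = length (ones n d')" by (rule k)
    fix i assume "i < length (ones n d)"
    thus "ones n d ! i = ones n d' ! i"
      using le[of "Suc i" d d'] le[of "Suc i" d' d] k assms(3) by fastforce
  qed
  show ?thesis
  proof (rule nth_equalityI)
    show "length d = length d'" using assms by simp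
    fix i assume i: "i < length d"
    have "d ! i = (Suc i \<in> set (ones n d))" "d' ! i = (Suc i \<in> set (ones n d'))"
      using i assms(1,2) unfolding ones_mem by auto
    thus "d ! i = d' ! i" using on by simp
  qed
qed

lemma LS_eq: assumes "length d = n" "Phi n w = S_set n d" shows "LS n w = d"
  unfolding LS_def
proof (rule the_equality)
  show "length d = n \<and> Phi n w = S_set n d" using assms by simp
  fix d' assume "length d' = n \<and> Phi n w = S_set n d'"
  thus "d' = d" using S_inj[of d' n d] assms by metis
qed


lemma S_Delta: "S_set n d \<subseteq> Delta_u n"
proof
  fix v assume "v \<in> S_set n d"
  then obtain m r where mr: "v = root_c r (n + 1 - m)" "Sc n d m r" unfolding S_Sc by blast
  have "m \<le> ones n d ! (m - 1)" using ones_ge[of m n d] mr(2) unfolding Sc_def by simp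
  hence "1 \<le> r" "r \<le> n + 1 - m" "n + 1 - m \<le> n" using mr(2) unfolding Sc_def by auto
  thus "v \<in> Delta_u n" unfolding Delta_u_def using mr(1) by blast
qed

lemma sig_cond: assumes sp: "sp n w" and D: "Phi n w \<subseteq> Delta_u n" and i: "1 \<le> i" "i \<le> n"
  shows "(w \<circ> simple_refl n i \<in> Wp n \<and> len n (w \<circ> simple_refl n i) > len n w)
     \<longleftrightarrow> (0 < w (x0 i) \<and> 0 < w (y0 n i))"
proof -
  let ?w = "w \<circ> simple_refl n i"
  have sp2: "sp n ?w" using sp_comp[OF sp sr_sp[OF i]] .
  note z = x0y0[OF i]
  have wz: "w (x0 i) \<in> II n" "w (y0 n i) \<in> II n" "w (x0 i) \<noteq> - w (y0 n i)"
    using sp_in[OF sp] z sp_negII[OF sp z(1,2)] by auto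
  show ?thesis
  proof
    assume h: "?w \<in> Wp n \<and> len n ?w > len n w"
    have P: "Pp (w (x0 i)) (w (y0 n i))"
    proof (rule ccontr)
      assume "\<not> Pp (w (x0 i)) (w (y0 n i))"
      from card_down[OF sp i this] h show False using len_eq[OF sp] len_eq[OF sp2] by simp
    qed
    have "EE (w (x0 i)) (w (y0 n i)) \<in> Delta_u n" using Phi_up(1)[OF sp i P] h unfolding Wp_def by auto
    thus "0 < w (x0 i) \<and> 0 < w (y0 n i)" using Delta_mem[OF wz] by simp
  next
    assume h: "0 < w (x0 i) \<and> 0 < w (y0 n i)"
    hence P: "Pp (w (x0 i)) (w (y0 n i))" unfolding Pp_def by simp
    have "EE (w (x0 i)) (w (y0 n i)) \<in> Delta_u n" using Delta_mem[OF wz] h by simp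
    hence "Phi n ?w \<subseteq> Delta_u n" using Phi_up(1)[OF sp i P] D by simp
    hence "?w \<in> Wp n" unfolding Wp_def using sp_weyl[OF sp2] by simp
    moreover have "len n ?w > len n w" using card_up[OF sp i P] len_eq[OF sp] len_eq[OF sp2] by simp
    ultimately show "?w \<in> Wp n \<and> len n ?w > len n w" by simp
  qed
qed

lemma cond_d: assumes "1 \<le> i" "i \<le> n"
  shows "(0 < wd n d (x0 i) \<and> 0 < wd n d (y0 n i)) \<longleftrightarrow>
     (if i < n then \<not> d ! (i - 1) \<and> d ! i else \<not> d ! (n - 1))"
proof (cases "i < n")
  case True
  have "wd n d (x0 i) = fd n d i" using wd_pos[OF assms] unfolding x0_def by simp
  moreover have "y0 n i = - int (i + 1)" using True unfolding y0_def by simp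
  hence "wd n d (y0 n i) = - fd n d (i + 1)" using wd_neg[of "i+1" n d] True by simp
  ultimately show ?thesis using fd_sign[OF assms, of d] fd_sign[of "i+1" n d] True by simp
next
  case False
  hence "i = n" using assms by simp
  thus ?thesis using wd_pos[OF assms, of d] fd_sign[OF assms, of d] unfolding x0_def y0_def by simp
qed

lemma Sigma_sub: "Sigma n lam \<subseteq> {1..n}" unfolding Sigma_def by auto

lemma img: "LS n ` WpSigma n lam = {d. length d = n \<and> (\<forall>i\<in>Sigma n lam.
    (if i < n then \<not> d ! (i - 1) \<and> d ! i else \<not> d ! (n - 1)))}"
proof (rule set_eqI, rule iffI)
  fix d assume "d \<in> LS n ` WpSigma n lam"
  then obtain w where w: "w \<in> WpSigma n lam" "d = LS n w" by blast
  have sp: "sp n w" and D: "Phi n w \<subseteq> Delta_u n" using w(1) weyl_sp unfolding WpSigma_def Wp_def by auto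
  let ?d = "sgnpat n w"
  have we: "w = wd n ?d" using Wp_form[OF sp D] .
  have "LS n w = ?d" using LS_eq[OF sgnpat_len] Phi_wd we by metis
  hence dd: "d = ?d" using w(2) by simp
  have "\<forall>i\<in>Sigma n lam. (if i < n then \<not> d ! (i - 1) \<and> d ! i else \<not> d ! (n - 1))"
  proof
    fix i assume iS: "i \<in> Sigma n lam"
    hence i: "1 \<le> i" "i \<le> n" using Sigma_sub[of n lam] by auto
    have "0 < w (x0 i) \<and> 0 < w (y0 n i)" using w(1) iS sig_cond[OF sp D i] unfolding WpSigma_def by auto
    thus "if i < n then \<not> d ! (i - 1) \<and> d ! i else \<not> d ! (n - 1)"
      using cond_d[OF i, of ?d] we dd by metis
  qed
  moreover have "length d = n" using dd sgnpat_len by simp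
  ultimately show "d \<in> {d. length d = n \<and> (\<forall>i\<in>Sigma n lam.
    (if i < n then \<not> d ! (i - 1) \<and> d ! i else \<not> d ! (n - 1)))}" by blast
next
  fix d assume "d \<in> {d. length d = n \<and> (\<forall>i\<in>Sigma n lam.
    (if i < n then \<not> d ! (i - 1) \<and> d ! i else \<not> d ! (n - 1)))}"
  hence d: "length d = n" "\<forall>i\<in>Sigma n lam. (if i < n then \<not> d ! (i - 1) \<and> d ! i else \<not> d ! (n - 1))" by auto
  let ?w = "wd n d"
  have sp: "sp n ?w" by (rule wd_sp)
  have D: "Phi n ?w \<subseteq> Delta_u n" using Phi_wd S_Delta by metis
  have "?w \<in> Wp n" unfolding Wp_def using sp_weyl[OF sp] D by simp
  moreover have "\<forall>i\<in>Sigma n lam. ?w \<circ> simple_refl n i \<in> Wp n \<and> len n (?w \<circ> simple_refl n i) > len n ?w"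
  proof
    fix i assume iS: "i \<in> Sigma n lam"
    hence i: "1 \<le> i" "i \<le> n" using Sigma_sub[of n lam] by auto
    show "?w \<circ> simple_refl n i \<in> Wp n \<and> len n (?w \<circ> simple_refl n i) > len n ?w"
    proof -
      have "if i < n then \<not> d ! (i - 1) \<and> d ! i else \<not> d ! (n - 1)" using d(2) iS by blast
      thus ?thesis using sig_cond[OF sp D i] cond_d[OF i, of d] by blast
    qed
  qed
  ultimately have "?w \<in> WpSigma n lam" unfolding WpSigma_def by simp
  moreover have "LS n ?w = d" using LS_eq[OF d(1) Phi_wd] .
  ultimately show "d \<in> LS n ` WpSigma n lam" by (metis image_eqI)
qed

theorem mainTheorem5:
  fixes n :: nat and lam :: "nat \<Rightarrow> int"
  assumes "n \<ge> 1"
    and dom: "\<forall>i. 1 \<le> i \<and> i < n \<longrightarrow> lam_rho n lam i \<ge> lam_rho n lam (i + 1)"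
    and dom_n: "lam_rho n lam n \<ge> 0"
    and nonadj: "\<forall>i \<in> Sigma n lam. i + 1 \<notin> Sigma n lam"
  shows "(n \<notin> Sigma n lam \<longrightarrow>
            LS n ` WpSigma n lam =
              {d. length d = n \<and> (\<forall>i \<in> Sigma n lam. \<not> d ! (i - 1) \<and> d ! i)})
       \<and> (n \<in> Sigma n lam \<longrightarrow>
            LS n ` WpSigma n lam =
              {d. length d = n \<and> \<not> d ! (n - 1) \<and>
                  (\<forall>i \<in> Sigma n lam - {n}. \<not> d ! (i - 1) \<and> d ! i)})"
proof (intro conjI impI)
  assume nS: "n \<notin> Sigma n lam"
  have "\<forall>i\<in>Sigma n lam. i < n"
  proof
    fix i assume "i \<in> Sigma n lam"
    hence "i \<le> n" "i \<noteq> n" using Sigma_sub[of n lam] nS by auto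
    thus "i < n" by simp
  qed
  thus "LS n ` WpSigma n lam = {d. length d = n \<and> (\<forall>i \<in> Sigma n lam. \<not> d ! (i - 1) \<and> d ! i)}"
    unfolding img by auto
next
  assume nS: "n \<in> Sigma n lam"
  have lt: "\<forall>i\<in>Sigma n lam - {n}. i < n"
  proof
    fix i assume "i \<in> Sigma n lam - {n}"
    hence "i \<le> n" "i \<noteq> n" using Sigma_sub[of n lam] by auto
    thus "i < n" by simp
  qed
  show "LS n ` WpSigma n lam = {d. length d = n \<and> \<not> d ! (n - 1) \<and>
                  (\<forall>i \<in> Sigma n lam - {n}. \<not> d ! (i - 1) \<and> d ! i)}"
    unfolding img
  proof (rule Collect_cong, rule iffI)
    fix d assume h: "length d = n \<and> (\<forall>i\<in>Sigma n lam. if i < n then \<not> d ! (i - 1) \<and> d ! i else \<not> d ! (n - 1))"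
    thus "length d = n \<and> \<not> d ! (n - 1) \<and> (\<forall>i\<in>Sigma n lam - {n}. \<not> d ! (i - 1) \<and> d ! i)"
      using nS lt by fastforce
  next
    fix d assume h: "length d = n \<and> \<not> d ! (n - 1) \<and> (\<forall>i\<in>Sigma n lam - {n}. \<not> d ! (i - 1) \<and> d ! i)"
    show "length d = n \<and> (\<forall>i\<in>Sigma n lam. if i < n then \<not> d ! (i - 1) \<and> d ! i else \<not> d ! (n - 1))"
    proof (intro conjI ballI)
      show "length d = n" using h by simp
      fix i assume iS: "i \<in> Sigma n lam"
      show "if i < n then \<not> d ! (i - 1) \<and> d ! i else \<not> d ! (n - 1)"
      proof (cases "i = n")
        case True thus ?thesis using h by simp
      next
        case False thus ?thesis using h iS lt by auto
      qed
    qed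
  qed
qed


end
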